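(* Let $\psi:\mathbb{N}\to[1,\infty)$ be a function with $\psi(n)\to\infty$ and $\log\psi(n)/\log n\to 0$ as $n\to\infty$, and let $d=d(n)$ be positive integers with $d\geq n/\psi(n)$. Then, as $n\to\infty$, $$p_d(n+1)\geq n^{\big(n+\frac{n\log d}{\psi(n)\log n}\big)(1+o(1))},$$ and consequently, if moreover $\frac{\log d}{\psi(n)\log n}\to 0$ as $n\to\infty$, then $p_d(n)\geq n^{n+o(n)}$.
   Context: $\mathbb{Z}_+=\{0,1,2,\dots\}$. A set $S\subset\mathbb{Z}_+^d$ is a lower set if whenever $\mathbf{x}\in S$ and $\mathbf{x}'\in\mathbb{Z}_+^d$ satisfies $x'_i\leq x_i$ for all $i$, then $\mathbf{x}'\in S$. $p_d(n)$ denotes the number of lower sets in $\mathbb{Z}_+^d$ with exactly $n$ points. $\log$ is the natural logarithm. *)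

theory Defs
  imports Complex_Main
begin

text \<open>Points of Z_+^d are represented as functions nat => nat vanishing at all
  coordinates i >= d.\<close>

definition lower_set :: "nat \<Rightarrow> (nat \<Rightarrow> nat) set \<Rightarrow> bool" where
  "lower_set d S \<longleftrightarrow>
     S \<subseteq> {x. \<forall>i\<ge>d. x i = 0} \<and>
     (\<forall>x\<in>S. \<forall>y. (\<forall>i. y i \<le> x i) \<longrightarrow> y \<in> S)"

definition p :: "nat \<Rightarrow> nat \<Rightarrow> nat" where
  "p d n = card {S. lower_set d S \<and> finite S \<and> card S = n}"

end

theory Submission
  imports Defs "HOL-Library.FuncSet" "HOL-Real_Asymp.Real_Asymp"
begin


definition chi :: "nat set \<Rightarrow> nat \<Rightarrow> nat" where
  "chi A = (\<lambda>i. if i \<in> A then 1 else 0)"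

lemma inj_chi: "inj chi"
proof (rule injI)
  fix A B assume "chi A = chi B"
  then have "\<forall>i. (if i \<in> A then 1 else 0::nat) = (if i \<in> B then 1 else 0)"
    by (simp add: chi_def fun_eq_iff)
  then show "A = B" by (metis (full_types) one_neq_zero subsetI subset_antisym)
qed

lemma lower_chi:
  assumes "\<And>A. A \<in> X \<Longrightarrow> A \<subseteq> {..<d}" "\<And>A B. A \<in> X \<Longrightarrow> B \<subseteq> A \<Longrightarrow> B \<in> X"
  shows "lower_set d (chi ` X)"
  unfolding lower_set_def
proof (intro conjI ballI allI impI)
  show "chi ` X \<subseteq> {x. \<forall>i\<ge>d. x i = 0}"
    using assms(1) by (force simp: chi_def)
next
  fix x y assume x: "x \<in> chi ` X" and y: "\<forall>i. y i \<le> x i"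
  then obtain A where A: "A \<in> X" "x = chi A" by auto
  have "y = chi {i. y i \<noteq> 0}"
  proof
    fix i show "y i = chi {i. y i \<noteq> 0} i"
      using y[rule_format, of i] A by (auto simp: chi_def split: if_splits)
  qed
  moreover have "{i. y i \<noteq> 0} \<subseteq> A"
    using y A by (auto simp: chi_def split: if_splits)
  ultimately show "y \<in> chi ` X" using assms(2)[OF A(1)] by blast
qed

lemma coord_bound:
  assumes "lower_set d S" "finite S" "x \<in> S"
  shows "x i \<le> card S"
proof -
  let ?y = "\<lambda>t::nat. (\<lambda>j. if j = i then t else 0)"
  have "?y ` {..x i} \<subseteq> S"
    using assms unfolding lower_set_def by auto
  moreover have "inj_on ?y {..x i}"
    by (rule inj_onI) (metis (mono_tags))
  ultimately have "card {..x i} \<le> card S"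
    using assms(2) by (metis card_image card_mono)
  then show ?thesis by simp
qed

lemma finite_lower:
  "finite {S. lower_set d S \<and> finite S \<and> card S = N}"
proof -
  define Box where "Box = {x::nat\<Rightarrow>nat. \<forall>i. x i \<le> N \<and> (i \<ge> d \<longrightarrow> x i = 0)}"
  have "Box \<subseteq> (\<lambda>f i. if i < d then f i else 0) ` ({..<d} \<rightarrow>\<^sub>E {..N})"
  proof
    fix x assume x: "x \<in> Box"
    have "x = (\<lambda>i. if i < d then restrict x {..<d} i else 0)"
      using x by (auto simp: Box_def fun_eq_iff)
    moreover have "restrict x {..<d} \<in> {..<d} \<rightarrow>\<^sub>E {..N}"
      using x by (auto simp: Box_def)
    ultimately show "x \<in> (\<lambda>f i. if i < d then f i else 0) ` ({..<d} \<rightarrow>\<^sub>E {..N})"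
      by blast
  qed
  then have fB: "finite Box"
    by (meson finite_PiE finite_atMost finite_imageI finite_lessThan finite_subset)
  have "{S. lower_set d S \<and> finite S \<and> card S = N} \<subseteq> Pow Box"
  proof
    fix S assume S: "S \<in> {S. lower_set d S \<and> finite S \<and> card S = N}"
    then have "S \<subseteq> Box"
      using coord_bound[of d S] unfolding Box_def lower_set_def by auto
    then show "S \<in> Pow Box" by simp
  qed
  then show ?thesis using fB by (meson finite_Pow_iff finite_subset)
qed

lemma count_lb:
  assumes "k \<le> d" "m \<le> k choose 2"
  shows "(d choose k) * ((k choose 2) choose m) \<le> p d (Suc (k + m))"
proof -
  define P2 where "P2 K = {B. B \<subseteq> K \<and> card B = 2}" for K :: "nat set"
  define KK where "KK = {K. K \<subseteq> {..<d} \<and> card K = k}"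
  define I where "I = Sigma KK (\<lambda>K. {E. E \<subseteq> P2 K \<and> card E = m})"
  define F where "F = (\<lambda>(K::nat set, E::nat set set). insert {} ((\<lambda>i. {i}) ` K \<union> E))"
  define G where "G = (\<lambda>KE. chi ` F KE)"
  define T where "T = {S. lower_set d S \<and> finite S \<and> card S = Suc (k+m)}"
  have fKK: "finite KK" unfolding KK_def by simp
  have cKK: "card KK = d choose k" unfolding KK_def using n_subsets[of "{..<d}" k] by simp
  have fin2: "finite (P2 K)" if "finite K" for K
    using that unfolding P2_def by simp
  have c2: "card (P2 K) = k choose 2" if "K \<in> KK" for K
  proof -
    have "finite K" "card K = k" using that unfolding KK_def by (auto intro: finite_subset)
    then show ?thesis unfolding P2_def using n_subsets[of K 2] by simp
  qed
  have cI: "card I = (d choose k) * ((k choose 2) choose m)"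
  proof -
    have "card I = (\<Sum>K\<in>KK. card {E. E \<subseteq> P2 K \<and> card E = m})"
    proof -
      have "finite {E. E \<subseteq> P2 K \<and> card E = m}" if "K \<in> KK" for K
      proof -
        have "finite (Pow (P2 K))" using that fin2 unfolding KK_def by (auto intro: finite_subset)
        then show ?thesis by (rule finite_subset[rotated]) auto
      qed
      then show ?thesis unfolding I_def using fKK by (simp add: card_SigmaI)
    qed
    also have "\<dots> = (\<Sum>K\<in>KK. (k choose 2) choose m)"
    proof (rule sum.cong[OF refl])
      fix K assume K: "K \<in> KK"
      then have "finite K" unfolding KK_def by (auto intro: finite_subset)
      then show "card {E. E \<subseteq> P2 K \<and> card E = m} = (k choose 2) choose m"
        using n_subsets[OF fin2, of K m] c2[OF K] by simp
    qed
    finally show ?thesis using cKK by simp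
  qed
  have FI: "K = {i. {i} \<in> F (K,E)}" "E = {B \<in> F (K,E). card B = 2}"
    if "(K,E) \<in> I" for K E
    using that unfolding F_def I_def P2_def KK_def by (auto simp: card_Suc_eq)
  have inj: "inj_on G I"
  proof (rule inj_onI)
    fix a b assume a: "a \<in> I" and b: "b \<in> I" and "G a = G b"
    then have "F a = F b" unfolding G_def using inj_chi by (simp add: inj_image_eq_iff)
    then show "a = b" using FI a b by (metis prod.collapse)
  qed
  have GT: "G ` I \<subseteq> T"
  proof
    fix x assume "x \<in> G ` I"
    then obtain K E where KE: "(K,E) \<in> I" and x: "x = chi ` F (K,E)" unfolding G_def by auto
    have K: "K \<subseteq> {..<d}" "card K = k" "finite K" and E: "E \<subseteq> P2 K" "card E = m"
      using KE unfolding I_def KK_def by (auto intro: finite_subset)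
    have sub: "A \<subseteq> {..<d}" if "A \<in> F (K,E)" for A
      using that K E unfolding F_def P2_def by auto
    have down: "B \<in> F (K,E)" if AF: "A \<in> F (K,E)" and BA: "B \<subseteq> A" for A B
    proof -
      consider "A = {}" | i where "A = {i}" "i \<in> K" | "A \<in> E"
        using AF unfolding F_def by auto
      then show ?thesis
      proof cases
        case 1 then show ?thesis using that unfolding F_def by auto
      next
        case 2 then show ?thesis using that unfolding F_def by (auto simp: subset_singleton_iff)
      next
        case 3
        then obtain a b where ab: "A = {a,b}" "a \<noteq> b" "a \<in> K" "b \<in> K"
          using E unfolding P2_def by (auto simp: card_2_iff)
        then have "B = {} \<or> B = {a} \<or> B = {b} \<or> B = {a,b}" using that(2) by blast
        then show ?thesis using ab 3 unfolding F_def by auto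
      qed
    qed
    have fF: "finite (F (K,E))" unfolding F_def using K E fin2[OF K(3)]
      by (auto intro: finite_subset)
    have "card (F (K,E)) = Suc (k + m)"
    proof -
      have "{} \<notin> (\<lambda>i. {i}) ` K \<union> E" using E unfolding P2_def by auto
      moreover have "finite ((\<lambda>i. {i}) ` K \<union> E)" using fF unfolding F_def by auto
      moreover have "card ((\<lambda>i. {i}) ` K \<union> E) = k + m"
      proof -
        have "(\<lambda>i. {i}) ` K \<inter> E = {}" using E unfolding P2_def by auto
        moreover have "card ((\<lambda>i. {i}) ` K) = k" using K by (simp add: card_image)
        moreover have "finite E" using E fin2[OF K(3)] by (auto intro: finite_subset)
        ultimately show ?thesis using K E by (simp add: card_Un_disjoint)
      qed
      ultimately show ?thesis unfolding F_def by simp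
    qed
    moreover have "card (chi ` F (K,E)) = card (F (K,E))"
      using inj_chi by (simp add: card_image inj_on_subset)
    ultimately show "x \<in> T" unfolding T_def x
      using lower_chi[of "F (K,E)" d] sub down fF by auto
  qed
  have "card I \<le> card T"
    using card_inj_on_le[OF inj GT] finite_lower unfolding T_def by blast
  then show ?thesis using cI unfolding T_def p_def by simp
qed



lemma real_choose_two: "real (k choose 2) = real k * (real k - 1) / 2"
proof -
  have "real (k choose 2) = real (k - 1) * k / 2"
    by (auto simp add: choose_two field_char_0_class.of_nat_div mod_eq_0_iff_dvd)
  then show ?thesis by (cases k) (auto simp: algebra_simps)
qed

lemma key_real:
  assumes "1 \<le> k" "k \<le> d" "1 \<le> m" "m \<le> k choose 2"
  shows "real (p d (Suc (k+m))) > 0 \<and>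
     real k * ln (real d / real k) + real m * ln (real (k choose 2) / real m) \<le> ln (real (p d (Suc (k+m))))"
proof -
  have b1: "(real d / real k) ^ k \<le> real (d choose k)"
    using binomial_ge_n_over_k_pow_k[OF assms(2)] by simp
  have b2: "(real (k choose 2) / real m) ^ m \<le> real ((k choose 2) choose m)"
    using binomial_ge_n_over_k_pow_k[OF assms(4)] by simp
  have pos1: "real d / real k > 0" using assms by simp
  have pos2: "real (k choose 2) / real m > 0" 
  proof -
    have "k choose 2 \<ge> 1" using assms(3,4) by linarith
    then have "real (k choose 2) \<ge> 1" by (metis of_nat_1 of_nat_le_iff)
    moreover have "real m > 0" using assms(3) by simp
    ultimately show ?thesis by (intro divide_pos_pos) linarith+
  qed
  have "(real d / real k) ^ k * (real (k choose 2) / real m) ^ m \<le> real (d choose k) * real ((k choose 2) choose m)"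
    by (rule mult_mono[OF b1 b2]) (use pos1 in auto)
  also have "\<dots> \<le> real (p d (Suc (k+m)))"
    using count_lb[OF assms(2) assms(4)] by (metis of_nat_le_iff of_nat_mult)
  finally have le: "(real d / real k) ^ k * (real (k choose 2) / real m) ^ m \<le> real (p d (Suc (k+m)))" .
  have pp: "(real d / real k) ^ k * (real (k choose 2) / real m) ^ m > 0"
    using pos1 pos2 by simp
  have "ln ((real d / real k) ^ k * (real (k choose 2) / real m) ^ m) =
      real k * ln (real d / real k) + real m * ln (real (k choose 2) / real m)"
  proof -
    define A where "A = real d / real k"
    define B where "B = real (k choose 2) / real m"
    have "A > 0" "B > 0" using pos1 pos2 unfolding A_def B_def by auto
    then have "ln (A ^ k * B ^ m) = real k * ln A + real m * ln B"
      by (simp add: ln_mult ln_realpow)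
    then show ?thesis unfolding A_def B_def .
  qed
  moreover have "ln ((real d / real k) ^ k * (real (k choose 2) / real m) ^ m) \<le> ln (real (p d (Suc (k+m))))"
    using le pp by simp
  ultimately show ?thesis using le pp by linarith
qed

lemma bound_core:
  fixes n d k m :: nat and \<psi> :: real
  assumes psi2: "\<psi> \<ge> 2" and lnpsi: "ln \<psi> \<le> ln (real n) / 4" and n256: "n \<ge> 256"
    and dge: "real d \<ge> real n / \<psi>"
    and kdef: "k = nat \<lceil>real n / \<psi>\<rceil>" and mdef: "m = n - k \<or> m = n - 1 - k"
  shows "1 \<le> k \<and> k \<le> d \<and> 1 \<le> m \<and> m \<le> k choose 2 \<and> k \<le> n \<and>
     real n * ln (real d) / \<psi> + real n * ln (real n) * ((1 - 1/\<psi> - 2/real n) *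
        (1 - 2*(ln \<psi>/ln (real n)) - ln 4/ln (real n)) - 1/\<psi> - 1/real n)
       \<le> real k * ln (real d / real k) + real m * ln (real (k choose 2) / real m)"
proof -
  define x where "x = real n / \<psi>"
  have npos: "real n \<ge> 256" using n256 by simp
  have lnn: "ln (real n) \<ge> ln 256" using npos by simp
  have l256: "ln (256::real) = 2 * ln 16"
    using ln_realpow[of "16::real" 2] by simp
  have lnpos: "ln (real n) > 0"
  proof -
    have "ln (256::real) > 0" by simp
    then show ?thesis using lnn by linarith
  qed
  have "ln (16 * \<psi>^2) = ln 16 + 2 * ln \<psi>" using psi2 by (simp add: ln_mult ln_realpow)
  also have "\<dots> \<le> ln (real n)" using lnpsi lnn l256 by linarith
  finally have "16 * \<psi>^2 \<le> real n"
    using psi2 npos by (subst (asm) ln_le_cancel_iff) auto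
  then have "real n * (16 * \<psi>^2) \<le> real n * real n" using npos by (intro mult_left_mono) auto
  then have q: "x^2 \<ge> 16 * real n"
    unfolding x_def using psi2 by (simp add: power_divide field_simps power2_eq_square)
  have x32: "x \<ge> 32"
  proof -
    have h1: "(32::real)^2 \<le> x^2" using q npos by simp
    have h2: "x \<ge> 0" unfolding x_def using psi2 by simp
    show ?thesis using power2_le_imp_le[OF h1 h2] .
  qed
  have xn: "x \<le> real n / 2" unfolding x_def using psi2 npos by (simp add: field_simps)
  have kx: "x \<le> real k" "real k \<le> x + 1"
    unfolding kdef x_def using psi2 by (simp_all add: of_nat_nat)
  have k1: "1 \<le> k" using kx x32 by linarith
  have kd: "k \<le> d"
  proof -
    have "\<lceil>real n / \<psi>\<rceil> \<le> int d" using dge by (simp add: ceiling_le)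
    then show ?thesis unfolding kdef by (simp only: nat_le_iff)
  qed
  have kn: "k \<le> n" using kx xn npos by linarith
  have mge: "real m \<ge> real n - x - 2" and mle: "m \<le> n"
    using mdef kx kn by (auto simp: of_nat_diff)
  have m1: "1 \<le> m" using mge xn npos by linarith
  have C: "real (k choose 2) \<ge> x^2 / 4"
  proof -
    have "real k - 1 \<ge> x / 2" using kx x32 by linarith
    then have "real k * (real k - 1) \<ge> x * (x/2)"
      using kx x32 by (intro mult_mono) auto
    then show ?thesis by (simp add: real_choose_two power2_eq_square)
  qed
  have mC: "m \<le> k choose 2"
  proof -
    have "real m \<le> real n" using mle by simp
    then have "real m \<le> real (k choose 2)" using C q npos by linarith
    then show ?thesis by simp
  qed
  define X where "X = ln (real n) - 2 * ln \<psi> - ln 4"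
  have lnC: "ln (real (k choose 2) / real m) \<ge> X"
  proof -
    have "real (k choose 2) / real m \<ge> (x^2/4) / real n"
      using C mle m1 q by (intro frac_le) auto
    moreover have "(x^2/4) / real n = real n / (4 * \<psi>^2)"
      unfolding x_def using psi2 npos by (simp add: power_divide field_simps power2_eq_square)
    moreover have "ln (real n / (4 * \<psi>^2)) = X"
      unfolding X_def using psi2 npos by (simp add: ln_div ln_mult ln_realpow)
    moreover have "real n / (4 * \<psi>^2) > 0" using psi2 npos by simp
    ultimately show ?thesis by (metis ln_le_cancel_iff order_less_le_trans)
  qed
  have X0: "X \<ge> 0"
  proof -
    have "ln (4::real) \<le> ln 16" by simp
    moreover have "ln (16::real) \<le> ln (real n) / 2" using lnn l256 by linarith
    ultimately show ?thesis unfolding X_def using lnpsi by linarith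
  qed
  have part_m: "real m * ln (real (k choose 2) / real m) \<ge> (real n - x - 2) * X"
  proof -
    have "real m * ln (real (k choose 2) / real m) \<ge> real m * X"
      using lnC by (intro mult_left_mono) auto
    moreover have "real m * X \<ge> (real n - x - 2) * X"
      using mge X0 by (intro mult_right_mono) auto
    ultimately show ?thesis by linarith
  qed
  have lnk: "0 \<le> ln (real k)" "ln (real k) \<le> ln (real n)"
    using k1 kn by auto
  have lnd: "0 \<le> ln (real d)" using k1 kd by simp
  have part_k: "real k * ln (real d / real k) \<ge> x * ln (real d) - (x + 1) * ln (real n)"
  proof -
    have "real k * ln (real d / real k) = real k * ln (real d) - real k * ln (real k)"
      using k1 kd by (simp add: ln_div right_diff_distrib)
    moreover have "real k * ln (real d) \<ge> x * ln (real d)"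
      using kx lnd by (intro mult_right_mono) auto
    moreover have "real k * ln (real k) \<le> (x + 1) * ln (real n)"
      using kx lnk x32 by (intro mult_mono) auto
    ultimately show ?thesis by linarith
  qed
  have alg: "real n * ln (real d) / \<psi> + real n * ln (real n) * ((1 - 1/\<psi> - 2/real n) *
        (1 - 2*(ln \<psi>/ln (real n)) - ln 4/ln (real n)) - 1/\<psi> - 1/real n)
      = x * ln (real d) - (x + 1) * ln (real n) + (real n - x - 2) * X"
  proof -
    have e1: "real n * (1 - 1/\<psi> - 2/real n) = real n - x - 2"
      unfolding x_def using npos by (simp add: algebra_simps)
    have e2: "ln (real n) * (1 - 2*(ln \<psi>/ln (real n)) - ln 4/ln (real n)) = X"
      unfolding X_def using lnpos by (simp add: algebra_simps)
    have e3: "real n * ln (real n) * (1/\<psi>) = x * ln (real n)"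
      unfolding x_def by simp
    have e4: "real n * ln (real n) * (1/real n) = ln (real n)"
      using npos by simp
    have e5: "real n * ln (real d) / \<psi> = x * ln (real d)" unfolding x_def by simp
    have "real n * ln (real n) * ((1 - 1/\<psi> - 2/real n) *
        (1 - 2*(ln \<psi>/ln (real n)) - ln 4/ln (real n)) - 1/\<psi> - 1/real n)
      = (real n * (1 - 1/\<psi> - 2/real n)) * (ln (real n) *
        (1 - 2*(ln \<psi>/ln (real n)) - ln 4/ln (real n))) - real n * ln (real n) * (1/\<psi>)
        - real n * ln (real n) * (1/real n)"
      by (simp only: algebra_simps)
    also have "\<dots> = (real n - x - 2) * X - x * ln (real n) - ln (real n)"
      unfolding e1 e2 e3 e4 ..
    finally show ?thesis unfolding e5 by (simp add: algebra_simps)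
  qed
  show ?thesis using alg part_k part_m k1 kd m1 mC kn by linarith
qed



lemma powr_step:
  assumes "real n \<ge> 2" "P > 0" "t \<le> ln P / ln (real n)"
  shows "real n powr t \<le> P"
proof -
  have "real n powr t \<le> real n powr (ln P / ln (real n))"
    using assms by (intro powr_mono) auto
  also have "\<dots> = P"
  proof -
    have "ln (real n) > 0" using assms(1) by simp
    then show ?thesis using assms by (simp add: powr_def)
  qed
  finally show ?thesis .
qed

lemma ratio_bound:
  fixes L A B h :: real
  assumes "A > 0" "B \<ge> 0" "L \<ge> B + A * h"
  shows "L / (A + B) \<ge> min 1 h"
proof (cases "h \<ge> 1")
  case True
  then have "A * h \<ge> A * 1" using assms by (intro mult_left_mono) auto
  then have "L \<ge> A + B" using assms by linarith
  then have "L / (A + B) \<ge> 1" using assms by (simp add: le_divide_eq)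
  then show ?thesis by linarith
next
  case False
  have "B * h \<le> B * 1" using False assms by (intro mult_left_mono) auto
  then have "L \<ge> (A + B) * h" using assms by (simp add: algebra_simps)
  then have "L / (A + B) \<ge> h" using assms by (simp add: field_simps)
  then show ?thesis by simp
qed

theorem proposition3:
  fixes \<psi> :: "nat \<Rightarrow> real" and d :: "nat \<Rightarrow> nat"
  assumes psi_ge1: "\<And>n. \<psi> n \<ge> 1"
    and psi_inf: "filterlim \<psi> at_top sequentially"
    and psi_slow: "(\<lambda>n. ln (\<psi> n) / ln (real n)) \<longlonglongrightarrow> 0"
    and d_pos: "\<And>n. d n \<ge> 1"
    and d_ge: "\<And>n. real (d n) \<ge> real n / \<psi> n"
  shows "(\<exists>\<epsilon> :: nat \<Rightarrow> real. \<epsilon> \<longlonglongrightarrow> 0 \<and>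
           (\<forall>\<^sub>F n in sequentially.
              real (p (d n) (n + 1)) \<ge>
                real n powr ((real n + real n * ln (real (d n)) / (\<psi> n * ln (real n)))
                             * (1 + \<epsilon> n))))
       \<and> ((\<lambda>n. ln (real (d n)) / (\<psi> n * ln (real n))) \<longlonglongrightarrow> 0 \<longrightarrow>
          (\<exists>\<epsilon> :: nat \<Rightarrow> real. \<epsilon> \<longlonglongrightarrow> 0 \<and>
           (\<forall>\<^sub>F n in sequentially.
              real (p (d n) n) \<ge> real n powr (real n + \<epsilon> n * real n))))"
proof -
  define h where "h n = (1 - 1/\<psi> n - 2/real n) *
        (1 - 2*(ln (\<psi> n)/ln (real n)) - ln 4/ln (real n)) - 1/\<psi> n - 1/real n" for n
  define k where "k n = nat \<lceil>real n / \<psi> n\<rceil>" for n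
  have inv0: "(\<lambda>n. 1 / \<psi> n) \<longlonglongrightarrow> 0"
    using tendsto_inverse_0_at_top[OF psi_inf] by (simp add: inverse_eq_divide)
  have l1: "(\<lambda>n. 2 / real n) \<longlonglongrightarrow> 0" by real_asymp
  have l2: "(\<lambda>n. ln 4 / ln (real n)) \<longlonglongrightarrow> 0" by real_asymp
  have l3: "(\<lambda>n. 1 / real n) \<longlonglongrightarrow> 0" by real_asymp
  have h_lim: "h \<longlonglongrightarrow> 1"
  proof -
    have "(\<lambda>n. (1 - 1/\<psi> n - 2/real n) *
        (1 - 2*(ln (\<psi> n)/ln (real n)) - ln 4/ln (real n)) - 1/\<psi> n - 1/real n)
        \<longlonglongrightarrow> (1 - 0 - 0) * (1 - 2 * 0 - 0) - 0 - 0"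
      by (intro tendsto_intros inv0 l1 l2 l3 psi_slow)
    then show ?thesis unfolding h_def by simp
  qed
  have lowlim: "(\<lambda>n. min 0 (min 1 (h n) - 1)) \<longlonglongrightarrow> 0"
  proof -
    have "(\<lambda>n. min 0 (min 1 (h n) - 1)) \<longlonglongrightarrow> min 0 (min 1 1 - 1)"
      by (intro tendsto_intros h_lim)
    then show ?thesis by simp
  qed
  have ev: "eventually (\<lambda>n. \<psi> n \<ge> 2 \<and> ln (\<psi> n) \<le> ln (real n) / 4 \<and> n \<ge> 256) sequentially"
  proof -
    have e1: "eventually (\<lambda>n. \<psi> n \<ge> 2) sequentially"
      using psi_inf by (simp add: filterlim_at_top)
    have e2: "eventually (\<lambda>n. ln (\<psi> n) / ln (real n) < 1/4) sequentially"
      using psi_slow by (rule order_tendstoD) simp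
    have e3: "eventually (\<lambda>n. n \<ge> (256::nat)) sequentially"
      by (rule eventually_ge_at_top)
    show ?thesis
    proof (rule eventually_mono[OF eventually_conj[OF e1 eventually_conj[OF e2 e3]]])
      fix n assume H: "2 \<le> \<psi> n \<and> ln (\<psi> n) / ln (real n) < 1 / 4 \<and> 256 \<le> n"
      then have "ln (real n) > 0" by simp
      then have "ln (\<psi> n) / ln (real n) * ln (real n) < 1/4 * ln (real n)"
        using H by (intro mult_strict_right_mono) auto
      then have "ln (\<psi> n) \<le> ln (real n) / 4" using \<open>ln (real n) > 0\<close> by simp
      then show "\<psi> n \<ge> 2 \<and> ln (\<psi> n) \<le> ln (real n) / 4 \<and> n \<ge> 256" using H by simp
    qed
  qed
  have core: "eventually (\<lambda>n. real (p (d n) (Suc (k n + m n))) > 0 \<and>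
      real n * ln (real (d n)) / \<psi> n + real n * ln (real n) * h n \<le> ln (real (p (d n) (Suc (k n + m n))))
      \<and> k n \<le> n \<and> 1 \<le> m n) sequentially"
    if mdef: "\<And>n. m n = n - k n \<or> m n = n - 1 - k n" for m :: "nat \<Rightarrow> nat"
  proof (rule eventually_mono[OF ev])
    fix n assume H: "\<psi> n \<ge> 2 \<and> ln (\<psi> n) \<le> ln (real n) / 4 \<and> n \<ge> 256"
    have B: "1 \<le> k n \<and> k n \<le> d n \<and> 1 \<le> m n \<and> m n \<le> k n choose 2 \<and> k n \<le> n \<and>
     real n * ln (real (d n)) / \<psi> n + real n * ln (real n) * h n
       \<le> real (k n) * ln (real (d n) / real (k n)) + real (m n) * ln (real (k n choose 2) / real (m n))"
      unfolding h_def using bound_core[of "\<psi> n" n "d n" "k n" "m n"] H d_ge[of n] k_def mdef[of n]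
      by blast
    then show "real (p (d n) (Suc (k n + m n))) > 0 \<and>
      real n * ln (real (d n)) / \<psi> n + real n * ln (real n) * h n \<le> ln (real (p (d n) (Suc (k n + m n))))
      \<and> k n \<le> n \<and> 1 \<le> m n"
      using key_real[of "k n" "d n" "m n"] by linarith
  qed
  define A where "A n = real n * ln (real n)" for n
  define B where "B n = real n * ln (real (d n)) / \<psi> n" for n
  have AB: "A n > 0" "B n \<ge> 0" if "n \<ge> 256" for n
  proof -
    have "ln (real n) > 0" using that by simp
    then show "A n > 0" unfolding A_def using that by simp
    show "B n \<ge> 0" unfolding B_def using d_pos[of n] psi_ge1[of n] by simp
  qed
  define m1 where "m1 n = n - k n" for n
  define m2 where "m2 n = n - 1 - k n" for n
  have ev1: "eventually (\<lambda>n. real (p (d n) (n + 1)) > 0 \<and>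
      B n + A n * h n \<le> ln (real (p (d n) (n + 1))) \<and> n \<ge> 256) sequentially"
  proof (rule eventually_mono[OF eventually_conj[OF core[of m1] ev]])
    show "m1 n = n - k n \<or> m1 n = n - 1 - k n" for n unfolding m1_def by simp
  next
    fix n assume H: "(0 < real (p (d n) (Suc (k n + m1 n))) \<and>
         real n * ln (real (d n)) / \<psi> n + real n * ln (real n) * h n
         \<le> ln (real (p (d n) (Suc (k n + m1 n)))) \<and> k n \<le> n \<and> 1 \<le> m1 n) \<and>
        2 \<le> \<psi> n \<and> ln (\<psi> n) \<le> ln (real n) / 4 \<and> 256 \<le> n"
    then have "Suc (k n + m1 n) = n + 1" unfolding m1_def by simp
    then show "real (p (d n) (n + 1)) > 0 \<and>
      B n + A n * h n \<le> ln (real (p (d n) (n + 1))) \<and> n \<ge> 256"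
      using H unfolding A_def B_def by (simp add: mult.assoc)
  qed
  have ev2: "eventually (\<lambda>n. real (p (d n) n) > 0 \<and>
      B n + A n * h n \<le> ln (real (p (d n) n)) \<and> n \<ge> 256) sequentially"
  proof (rule eventually_mono[OF eventually_conj[OF core[of m2] ev]])
    show "m2 n = n - k n \<or> m2 n = n - 1 - k n" for n unfolding m2_def by simp
  next
    fix n assume H: "(0 < real (p (d n) (Suc (k n + m2 n))) \<and>
         real n * ln (real (d n)) / \<psi> n + real n * ln (real n) * h n
         \<le> ln (real (p (d n) (Suc (k n + m2 n)))) \<and> k n \<le> n \<and> 1 \<le> m2 n) \<and>
        2 \<le> \<psi> n \<and> ln (\<psi> n) \<le> ln (real n) / 4 \<and> 256 \<le> n"
    then have "1 \<le> n - 1 - k n" unfolding m2_def by simp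
    then have "Suc (k n + m2 n) = n" unfolding m2_def by linarith
    then show "real (p (d n) n) > 0 \<and>
      B n + A n * h n \<le> ln (real (p (d n) n)) \<and> n \<ge> 256"
      using H unfolding A_def B_def by (simp add: mult.assoc)
  qed
  define g1 where "g1 n = ln (real (p (d n) (n + 1))) / (A n + B n)" for n
  define e1 where "e1 n = min 0 (g1 n - 1)" for n
  define g2 where "g2 n = ln (real (p (d n) n)) / (A n + 0)" for n
  define e2 where "e2 n = min 0 (g2 n - 1)" for n
  have e1_lim: "e1 \<longlonglongrightarrow> 0"
  proof (rule tendsto_sandwich[OF _ _ lowlim tendsto_const])
    show "eventually (\<lambda>n. min 0 (min 1 (h n) - 1) \<le> e1 n) sequentially"
    proof (rule eventually_mono[OF ev1])
      fix n assume H: "real (p (d n) (n + 1)) > 0 \<and>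
        B n + A n * h n \<le> ln (real (p (d n) (n + 1))) \<and> n \<ge> 256"
      then have "g1 n \<ge> min 1 (h n)" unfolding g1_def using AB[of n] by (intro ratio_bound) auto
      then show "min 0 (min 1 (h n) - 1) \<le> e1 n" unfolding e1_def by linarith
    qed
    show "eventually (\<lambda>n. e1 n \<le> 0) sequentially" unfolding e1_def by simp
  qed
  have e2_lim: "e2 \<longlonglongrightarrow> 0"
  proof (rule tendsto_sandwich[OF _ _ lowlim tendsto_const])
    show "eventually (\<lambda>n. min 0 (min 1 (h n) - 1) \<le> e2 n) sequentially"
    proof (rule eventually_mono[OF ev2])
      fix n assume H: "real (p (d n) n) > 0 \<and>
        B n + A n * h n \<le> ln (real (p (d n) n)) \<and> n \<ge> 256"
      then have "0 + A n * h n \<le> ln (real (p (d n) n))" using AB[of n] by linarith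
      then have "g2 n \<ge> min 1 (h n)" unfolding g2_def using AB[of n] H by (intro ratio_bound) auto
      then show "min 0 (min 1 (h n) - 1) \<le> e2 n" unfolding e2_def by linarith
    qed
    show "eventually (\<lambda>n. e2 n \<le> 0) sequentially" unfolding e2_def by simp
  qed
  have P1: "eventually (\<lambda>n. real (p (d n) (n + 1)) \<ge>
                real n powr ((real n + real n * ln (real (d n)) / (\<psi> n * ln (real n)))
                             * (1 + e1 n))) sequentially"
  proof (rule eventually_mono[OF ev1])
    fix n assume H: "real (p (d n) (n + 1)) > 0 \<and>
        B n + A n * h n \<le> ln (real (p (d n) (n + 1))) \<and> n \<ge> 256"
    define E where "E = real n + real n * ln (real (d n)) / (\<psi> n * ln (real n))"
    have lnp: "ln (real n) > 0" using H by simp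
    have EE: "E = (A n + B n) / ln (real n)"
      unfolding E_def A_def B_def using lnp psi_ge1[of n] by (simp add: field_simps)
    have E0: "E \<ge> 0" using EE AB[of n] H lnp by simp
    have "1 + e1 n \<le> g1 n" unfolding e1_def by simp
    then have "E * (1 + e1 n) \<le> E * g1 n" using E0 by (rule mult_left_mono)
    also have "E * g1 n = ln (real (p (d n) (n + 1))) / ln (real n)"
    proof -
      have nz: "A n + B n \<noteq> 0" "ln (real n) \<noteq> 0" using AB[of n] H lnp by auto
      have gen: "a / l * (P / a) = P / l" if "a \<noteq> 0" "l \<noteq> 0" for a l P :: real
        using that by (simp add: field_simps)
      show ?thesis unfolding EE g1_def using gen[OF nz] .
    qed
    finally have "E * (1 + e1 n) \<le> ln (real (p (d n) (n + 1))) / ln (real n)" .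
    then show "real (p (d n) (n + 1)) \<ge> real n powr (E * (1 + e1 n))"
      using H by (intro powr_step) auto
  qed
  have P2: "eventually (\<lambda>n. real (p (d n) n) \<ge> real n powr (real n + e2 n * real n)) sequentially"
  proof (rule eventually_mono[OF ev2])
    fix n assume H: "real (p (d n) n) > 0 \<and>
        B n + A n * h n \<le> ln (real (p (d n) n)) \<and> n \<ge> 256"
    have lnp: "ln (real n) > 0" using H by simp
    have "1 + e2 n \<le> g2 n" unfolding e2_def by simp
    then have "real n * (1 + e2 n) \<le> real n * g2 n" by (rule mult_left_mono) simp
    also have "real n * g2 n = ln (real (p (d n) n)) / ln (real n)"
      unfolding g2_def A_def using H lnp by (simp add: field_simps)
    finally have "real n + e2 n * real n \<le> ln (real (p (d n) n)) / ln (real n)"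
      by (simp add: algebra_simps)
    then show "real (p (d n) n) \<ge> real n powr (real n + e2 n * real n)"
      using H by (intro powr_step) auto
  qed
  show ?thesis using e1_lim P1 e2_lim P2 by blast
qed

end
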